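(* Let $\{\tau_n\}_{n\ge1}$ be a nonnegative sequence and $\{a_n\}_{n\ge1}$ a non-decreasing strictly positive sequence. Suppose there are finite real constants $\theta\ge1$, $C>0$ and $N\ge2$ such that for all $n\ge N$, $$\frac{a_n^{2\theta}}{n^{\theta-1}}\sum_{k=n}^\infty\frac{k^\theta\tau_k}{a_k^{2\theta}}\le C\sum_{k=1}^{n-1}k\tau_k,$$ and $$\liminf_{n\to\infty}\inf_{k\ge n}\frac{a_k^2}{ka_n^2}\sum_{j=1}^{n-1}j\tau_j>0.$$ Then every random variable $X_1$ satisfying $\sum_{n=1}^\infty n\tau_nP(|X_1|\ge\varepsilon a_n)<\infty$ for all $\varepsilon>0$ also satisfies $\sum_{n=1}^\infty\tau_n e^{-\varepsilon^2a_n^2/(nT_{\varepsilon,n})}<\infty$ for all $\varepsilon>0$, where $T_{\varepsilon,n}=E[X_1^21_{\{|X_1|<\varepsilon a_n\}}]$ and $e^{-t/0}=0$ for $t>0$.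
   Context: "Positive" means nonnegative; "increasing" means non-decreasing. *)

theory Defs
  imports "HOL-Probability.Probability"
begin

definition exp_neg_quot :: "real \<Rightarrow> real \<Rightarrow> real" where
  "exp_neg_quot t s = (if s = 0 then 0 else exp (- t / s))"

end

theory Submission
  imports Defs
begin

lemma exp_bound:
  fixes \<theta> x :: real
  assumes "\<theta> \<ge> 1" "x > 0"
  shows "exp (- x) \<le> \<theta> powr \<theta> * x powr (- \<theta>)"
proof -
  have "x / \<theta> < exp (x / \<theta>)"
    using exp_gt_zero[of "x/\<theta>"] exp_ge_add_one_self[of "x/\<theta>"] by linarith
  hence "(x / \<theta>) powr \<theta> \<le> exp (x / \<theta>) powr \<theta>"
    using assms by (intro powr_mono2) auto
  also have "exp (x / \<theta>) powr \<theta> = exp x"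
    using assms by (simp add: powr_def)
  finally have e: "(x / \<theta>) powr \<theta> \<le> exp x" .
  have pos: "(x / \<theta>) powr \<theta> > 0" using assms by simp
  have "exp (- x) = 1 / exp x" by (simp add: exp_minus field_simps)
  also have "\<dots> \<le> 1 / (x / \<theta>) powr \<theta>"
    using e pos by (intro divide_left_mono) auto
  also have "\<dots> = \<theta> powr \<theta> * x powr (- \<theta>)"
    using assms by (simp add: powr_divide powr_minus divide_simps)
  finally show ?thesis .
qed

lemma a_mono_le:
  fixes a :: "nat \<Rightarrow> real"
  assumes "\<forall>n\<ge>1. a n \<le> a (Suc n)" "1 \<le> i" "i \<le> j"
  shows "a i \<le> a j"
  using assms(3)
proof (induction j rule: dec_induct)
  case base then show ?case by simp
next
  case (step n)
  then show ?case using assms(1,2) by (meson order_trans le_trans)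
qed

lemma young_pt:
  fixes z g A B \<theta> :: real
  assumes "\<theta> > 1" "z \<ge> 0" "g > 0" "A > 0" "B > 0"
  shows "z \<le> A powr (1/\<theta>) * B powr (1 - 1/\<theta>) *
     ((1/\<theta>) * (z powr \<theta> * g powr (1 - \<theta>) / A) + (1 - 1/\<theta>) * (g / B))"
proof (cases "z = 0")
  case True
  then show ?thesis using assms by (simp add: divide_simps)
next
  case False
  hence zp: "z > 0" using assms by simp
  let ?a = "z powr \<theta> * g powr (1 - \<theta>) / A" and ?b = "g / B"
  have ap: "?a > 0" "?b > 0" using assms zp by auto
  have Y: "?a powr (1/\<theta>) * ?b powr (1 - 1/\<theta>) \<le> (1/\<theta>) * ?a + (1 - 1/\<theta>) * ?b"
    using assms ap by (intro Youngs_inequality_0) auto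
  have "?a powr (1/\<theta>) = z * g powr ((1 - \<theta>)/\<theta>) / A powr (1/\<theta>)"
    using assms zp by (simp add: powr_divide powr_mult powr_powr)
  moreover have "?b powr (1 - 1/\<theta>) = g powr (1 - 1/\<theta>) / B powr (1 - 1/\<theta>)"
    using assms by (simp add: powr_divide)
  moreover have "g powr ((1 - \<theta>)/\<theta>) * g powr (1 - 1/\<theta>) = 1"
  proof -
    have "(1 - \<theta>)/\<theta> + (1 - 1/\<theta>) = 0" using assms by (simp add: field_simps)
    thus ?thesis using assms by (simp add: powr_add[symmetric])
  qed
  ultimately have "?a powr (1/\<theta>) * ?b powr (1 - 1/\<theta>) = z / (A powr (1/\<theta>) * B powr (1 - 1/\<theta>))"
    by (simp add: field_simps)
  with Y have "z / (A powr (1/\<theta>) * B powr (1 - 1/\<theta>)) \<le> (1/\<theta>) * ?a + (1 - 1/\<theta>) * ?b" by simp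
  moreover have "A powr (1/\<theta>) * B powr (1 - 1/\<theta>) > 0" using assms by simp
  ultimately show ?thesis by (simp add: divide_le_eq mult.commute)
qed

lemma powr_le_one_neg:
  fixes g e :: real
  assumes "g \<ge> 1" "e \<le> 0"
  shows "g powr e \<le> 1"
proof -
  have "1 \<le> g powr (- e)" using assms by (intro ge_one_powr_ge_zero) auto
  moreover have "g powr e = 1 / g powr (- e)" using assms by (simp add: powr_minus_divide)
  ultimately show ?thesis by (simp add: divide_le_eq)
qed

lemma holder:
  fixes Z G :: "'s \<Rightarrow> real" and \<theta> bZ bG :: real
  assumes P: "prob_space M" and Zm: "Z \<in> borel_measurable M" and Gm: "G \<in> borel_measurable M"
    and Zb: "\<forall>\<omega>\<in>space M. 0 \<le> Z \<omega> \<and> Z \<omega> \<le> bZ"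
    and Gb: "\<forall>\<omega>\<in>space M. 1 \<le> G \<omega> \<and> G \<omega> \<le> bG"
    and th: "\<theta> \<ge> 1"
  shows "(\<integral>\<omega>. Z \<omega> \<partial>M) powr \<theta> \<le> (\<integral>\<omega>. G \<omega> \<partial>M) powr (\<theta> - 1) * (\<integral>\<omega>. Z \<omega> powr \<theta> * G \<omega> powr (1 - \<theta>) \<partial>M)"
proof -
  interpret prob_space M by (rule P)
  have iZ: "integrable M Z"
    using Zb Zm by (intro integrable_const_bound[where B=bZ] AE_I2) auto
  have iG: "integrable M G"
    using Gb Gm by (intro integrable_const_bound[where B=bG] AE_I2) auto
  have mW: "(\<lambda>\<omega>. Z \<omega> powr \<theta> * G \<omega> powr (1 - \<theta>)) \<in> borel_measurable M"
    using Zm Gm by measurable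
  have Wb: "\<forall>\<omega>\<in>space M. 0 \<le> Z \<omega> powr \<theta> * G \<omega> powr (1 - \<theta>) \<and> Z \<omega> powr \<theta> * G \<omega> powr (1 - \<theta>) \<le> bZ powr \<theta>"
  proof
    fix \<omega> assume w: "\<omega> \<in> space M"
    have "G \<omega> powr (1 - \<theta>) \<le> 1"
      using Gb w th by (intro powr_le_one_neg) auto
    moreover have "Z \<omega> powr \<theta> \<le> bZ powr \<theta>" using Zb w th by (intro powr_mono2) auto
    ultimately show "0 \<le> Z \<omega> powr \<theta> * G \<omega> powr (1 - \<theta>) \<and> Z \<omega> powr \<theta> * G \<omega> powr (1 - \<theta>) \<le> bZ powr \<theta>"
      by (simp add: mult_le_one mult_le_cancel_left1 order_trans[OF mult_left_le])
  qed
  have iW: "integrable M (\<lambda>\<omega>. Z \<omega> powr \<theta> * G \<omega> powr (1 - \<theta>))"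
    using Wb mW by (intro integrable_const_bound[where B="bZ powr \<theta>"] AE_I2) auto
  define A where "A = (\<integral>\<omega>. Z \<omega> powr \<theta> * G \<omega> powr (1 - \<theta>) \<partial>M)"
  define B where "B = (\<integral>\<omega>. G \<omega> \<partial>M)"
  have B1: "B \<ge> 1"
  proof -
    have "(\<integral>\<omega>. 1 \<partial>M) \<le> B" unfolding B_def using Gb iG by (intro integral_mono) auto
    thus ?thesis by (simp add: prob_space)
  qed
  have A0: "A \<ge> 0" unfolding A_def using Wb by (intro integral_nonneg_AE AE_I2) auto
  show ?thesis
  proof (cases "\<theta> = 1")
    case True
    have "\<forall>\<omega>\<in>space M. Z \<omega> powr \<theta> * G \<omega> powr (1 - \<theta>) = Z \<omega>"
      using True Zb Gb by auto
    hence "A = (\<integral>\<omega>. Z \<omega> \<partial>M)" unfolding A_def by (intro Bochner_Integration.integral_cong) auto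
    then show ?thesis using True A0 B1 unfolding A_def[symmetric] B_def[symmetric] by simp
  next
    case False
    hence th1: "\<theta> > 1" using th by simp
    show ?thesis
    proof (cases "A = 0")
      case True
      have "AE \<omega> in M. Z \<omega> powr \<theta> * G \<omega> powr (1 - \<theta>) = 0"
        using True iW Wb unfolding A_def by (subst integral_nonneg_eq_0_iff_AE[symmetric]) auto
      hence "AE \<omega> in M. Z \<omega> = 0"
        using AE_space
      proof eventually_elim
        case (elim \<omega>)
        then have "G \<omega> powr (1 - \<theta>) > 0" using Gb by auto
        with elim show ?case by simp
      qed
      then have "(\<integral>\<omega>. Z \<omega> \<partial>M) = 0" by (simp add: integral_eq_zero_AE)
      then show ?thesis using th by simp
    next
      case False
      hence Ap: "A > 0" using A0 by simp
      define D where "D = A powr (1/\<theta>) * B powr (1 - 1/\<theta>)"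
      have pt: "\<forall>\<omega>\<in>space M. Z \<omega> \<le> D * ((1/\<theta>) * (Z \<omega> powr \<theta> * G \<omega> powr (1 - \<theta>) / A) + (1 - 1/\<theta>) * (G \<omega> / B))"
        using young_pt th1 Zb Gb Ap B1 unfolding D_def by force
      have "(\<integral>\<omega>. Z \<omega> \<partial>M) \<le> (\<integral>\<omega>. D * ((1/\<theta>) * (Z \<omega> powr \<theta> * G \<omega> powr (1 - \<theta>) / A) + (1 - 1/\<theta>) * (G \<omega> / B)) \<partial>M)"
        using pt iZ iW iG by (intro integral_mono) auto
      also have "\<dots> = D * ((1/\<theta>) * (A / A) + (1 - 1/\<theta>) * (B / B))"
        using iW iG unfolding A_def B_def by simp
      also have "\<dots> = D" using Ap B1 by simp
      finally have "(\<integral>\<omega>. Z \<omega> \<partial>M) \<le> D" .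
      moreover have "(\<integral>\<omega>. Z \<omega> \<partial>M) \<ge> 0" using Zb by (intro integral_nonneg_AE AE_I2) auto
      ultimately have "(\<integral>\<omega>. Z \<omega> \<partial>M) powr \<theta> \<le> D powr \<theta>" using th by (intro powr_mono2) auto
      also have "D powr \<theta> = A * B powr (\<theta> - 1)"
      proof -
        have e: "(1 - 1/\<theta>) * \<theta> = \<theta> - 1" using th1 by (simp add: field_simps)
        show ?thesis
          using Ap B1 th1 unfolding D_def by (simp add: powr_mult powr_powr e)
      qed
      finally show ?thesis unfolding A_def B_def by (simp add: mult.commute)
    qed
  qed
qed

lemma img_shift:
  fixes k Q :: nat
  assumes "k \<le> Q + 1"
  shows "{k..Q} = (\<lambda>i. i + k) ` {..<Q + 1 - k}"
  using assms
  apply (auto simp: image_iff)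
  apply (rule_tac x="x - k" in bexI)
  by auto

lemma sq_powr:
  fixes x t :: real
  assumes "x > 0"
  shows "(x\<^sup>2) powr t = x powr (2 * t)"
proof -
  have "x\<^sup>2 = x powr 2" using assms by (simp add: powr_realpow)
  thus ?thesis by (simp add: powr_powr)
qed

lemma pointwise:
  fixes \<tau> a f S :: "nat \<Rightarrow> real" and x g \<epsilon> \<theta> C \<delta> R1 :: real and Q N :: nat
  assumes tau: "\<forall>n\<ge>1. \<tau> n \<ge> 0" and apos: "\<forall>n\<ge>1. a n > 0"
    and amono: "\<And>i j. 1 \<le> i \<Longrightarrow> i \<le> j \<Longrightarrow> a i \<le> a j"
    and th: "\<theta> \<ge> 1" and C: "C > 0" and eps: "\<epsilon> > 0" and x: "x \<ge> 0" and N: "N \<ge> 1"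
    and f_def: "\<And>m. f m = real m powr \<theta> * \<tau> m / a m powr (2 * \<theta>)"
    and S_def: "\<And>k. S k = (\<Sum>j\<in>{1..<k}. real j * \<tau> j)"
    and sumf: "summable (\<lambda>i. f (i + 1))" and R1: "R1 = (\<Sum>i. f (i + 1))"
    and cond1: "\<forall>k\<ge>N. summable (\<lambda>i. f (i + k)) \<and>
        a k powr (2 * \<theta>) / real k powr (\<theta> - 1) * (\<Sum>i. f (i + k)) \<le> C * S k"
    and delta: "\<delta> > 0" "\<forall>k\<ge>1. \<delta> * real k \<le> 1 + S k"
    and g: "g = 1 + (\<Sum>j\<in>{1..Q}. real j * \<tau> j * (if \<epsilon> * a j \<le> x then 1 else 0))"
  shows "(\<Sum>m\<in>{1..Q}. \<tau> m * ((real m / (a m)\<^sup>2 * (x\<^sup>2 * (if x < \<epsilon> * a m then 1 else 0))) powr \<theta> * g powr (1 - \<theta>)))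
     \<le> (C * (\<epsilon>\<^sup>2) powr \<theta> * \<delta> powr (1 - \<theta>) + (\<epsilon>\<^sup>2 * (a N)\<^sup>2) powr \<theta> * R1) * g"
proof -
  have fnn: "\<And>m. m \<ge> 1 \<Longrightarrow> f m \<ge> 0" using tau apos unfolding f_def by auto
  have Snn: "\<And>k. S k \<ge> 0" unfolding S_def using tau by (intro sum_nonneg) auto
  have g1: "g \<ge> 1" unfolding g using tau by (auto intro!: sum_nonneg)
  have R1nn: "R1 \<ge> 0" unfolding R1 using fnn by (intro suminf_nonneg sumf) auto
  define K1 where "K1 = C * (\<epsilon>\<^sup>2) powr \<theta> * \<delta> powr (1 - \<theta>)"
  define K2 where "K2 = (\<epsilon>\<^sup>2 * (a N)\<^sup>2) powr \<theta> * R1"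
  have K1nn: "K1 \<ge> 0" unfolding K1_def using C by simp
  have K2nn: "K2 \<ge> 0" unfolding K2_def using R1nn by simp
  define P where "P = {m\<in>{1..Q}. x < \<epsilon> * a m}"
  define W where "W = (x\<^sup>2) powr \<theta> * g powr (1 - \<theta>)"
  have Wnn: "W \<ge> 0" unfolding W_def by simp
  have termeq: "\<tau> m * ((real m / (a m)\<^sup>2 * (x\<^sup>2 * (if x < \<epsilon> * a m then 1 else 0))) powr \<theta> * g powr (1 - \<theta>))
      = (if m \<in> P then f m * W else 0)" if m: "m \<in> {1..Q}" for m
  proof (cases "x < \<epsilon> * a m")
    case True
    have am: "a m > 0" using apos m by auto
    have "(real m / (a m)\<^sup>2 * x\<^sup>2) powr \<theta> = real m powr \<theta> / ((a m)\<^sup>2) powr \<theta> * (x\<^sup>2) powr \<theta>"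
      using am by (simp add: powr_mult powr_divide)
    also have "((a m)\<^sup>2) powr \<theta> = a m powr (2 * \<theta>)"
      using am by (rule sq_powr)
    finally show ?thesis using True m unfolding P_def W_def f_def by simp
  next
    case False
    then show ?thesis using m th unfolding P_def by simp
  qed
  have "(\<Sum>m\<in>{1..Q}. \<tau> m * ((real m / (a m)\<^sup>2 * (x\<^sup>2 * (if x < \<epsilon> * a m then 1 else 0))) powr \<theta> * g powr (1 - \<theta>)))
      = (\<Sum>m\<in>{1..Q}. if m \<in> P then f m * W else 0)"
    using termeq by (intro sum.cong) auto
  also have "\<dots> = (\<Sum>m\<in>P. f m * W)"
    unfolding P_def by (simp add: sum.inter_filter[symmetric]) 
  also have "\<dots> = (\<Sum>m\<in>P. f m) * W" by (simp add: sum_distrib_right)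
  finally have eq: "(\<Sum>m\<in>{1..Q}. \<tau> m * ((real m / (a m)\<^sup>2 * (x\<^sup>2 * (if x < \<epsilon> * a m then 1 else 0))) powr \<theta> * g powr (1 - \<theta>)))
      = (\<Sum>m\<in>P. f m) * W" .
  show ?thesis
  proof (cases "P = {}")
    case True
    then show ?thesis unfolding eq using K1nn K2nn g1 unfolding K1_def K2_def by simp
  next
    case False
    have finP: "finite P" unfolding P_def by simp
    define k where "k = Min P"
    have kP: "k \<in> P" unfolding k_def using finP False by simp
    hence k1: "k \<ge> 1" and kQ: "k \<le> Q" and xk: "x < \<epsilon> * a k" unfolding P_def by auto
    have Pk: "P = {k..Q}"
    proof
      show "P \<subseteq> {k..Q}" using finP unfolding k_def by (auto simp: P_def)
      show "{k..Q} \<subseteq> P"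
      proof
        fix m assume m: "m \<in> {k..Q}"
        have "a k \<le> a m" using amono k1 m by auto
        hence "\<epsilon> * a k \<le> \<epsilon> * a m" using eps by simp
        hence "x < \<epsilon> * a m" using xk by linarith
        thus "m \<in> P" using m k1 unfolding P_def by auto
      qed
    qed
    have gS: "1 + S k \<le> g"
    proof -
      have "S k = (\<Sum>j\<in>{1..<k}. real j * \<tau> j * (if \<epsilon> * a j \<le> x then 1 else 0))"
        unfolding S_def
      proof (intro sum.cong refl)
        fix j assume j: "j \<in> {1..<k}"
        have "j \<notin> P" using j finP unfolding k_def by (meson Min_le atLeastLessThan_iff leD)
        moreover have "j \<in> {1..Q}" using j kQ by auto
        ultimately have "\<epsilon> * a j \<le> x" unfolding P_def by auto
        thus "real j * \<tau> j = real j * \<tau> j * (if \<epsilon> * a j \<le> x then 1 else 0)" by simp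
      qed
      also have "\<dots> \<le> (\<Sum>j\<in>{1..Q}. real j * \<tau> j * (if \<epsilon> * a j \<le> x then 1 else 0))"
        using kQ tau by (intro sum_mono2) auto
      finally show ?thesis unfolding g by simp
    qed
    have ak: "a k > 0" using apos k1 by auto
    have x2: "(x\<^sup>2) powr \<theta> \<le> (\<epsilon>\<^sup>2 * (a k)\<^sup>2) powr \<theta>"
    proof -
      have "x\<^sup>2 \<le> (\<epsilon> * a k)\<^sup>2" using x xk by (intro power_mono) auto
      thus ?thesis using th by (intro powr_mono2) (auto simp: power_mult_distrib)
    qed
    have gpow: "g powr (1 - \<theta>) \<ge> 0" by simp
    show ?thesis
    proof (cases "k \<ge> N")
      case True
      from cond1 True have sk: "summable (\<lambda>i. f (i + k))"
        and ck: "a k powr (2 * \<theta>) / real k powr (\<theta> - 1) * (\<Sum>i. f (i + k)) \<le> C * S k" by auto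
      have "(\<Sum>m\<in>P. f m) = (\<Sum>i<Q - k + 1. f (i + k))"
        unfolding Pk
      proof -
        have "{k..Q} = (\<lambda>i. i + k) ` {..<Q - k + 1}" using kQ img_shift[of k Q]
          by (simp add: Suc_diff_le)
        thus "sum f {k..Q} = (\<Sum>i<Q - k + 1. f (i + k))"
          by (simp add: sum.reindex inj_on_def)
      qed
      also have "\<dots> \<le> (\<Sum>i. f (i + k))"
        using sk fnn k1 by (intro sum_le_suminf) auto
      finally have sP: "(\<Sum>m\<in>P. f m) \<le> (\<Sum>i. f (i + k))" .
      have kp: "real k powr (\<theta> - 1) > 0" using k1 by simp
      have akp: "a k powr (2 * \<theta>) > 0" using ak by simp
      have Rk: "(\<Sum>i. f (i + k)) \<le> C * S k * real k powr (\<theta> - 1) / a k powr (2 * \<theta>)"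
        using ck kp akp by (simp add: field_simps)
      have "(\<Sum>m\<in>P. f m) * W \<le> (C * S k * real k powr (\<theta> - 1) / a k powr (2 * \<theta>)) * ((\<epsilon>\<^sup>2 * (a k)\<^sup>2) powr \<theta> * g powr (1 - \<theta>))"
        unfolding W_def using sP Rk x2 gpow C Snn[of k]
        by (intro mult_mono order_trans[OF sP Rk]) (auto intro!: sum_nonneg fnn simp: Pk)
      also have "(\<epsilon>\<^sup>2 * (a k)\<^sup>2) powr \<theta> = (\<epsilon>\<^sup>2) powr \<theta> * a k powr (2 * \<theta>)"
        using ak by (simp add: powr_mult sq_powr)
      also have "(C * S k * real k powr (\<theta> - 1) / a k powr (2 * \<theta>)) * ((\<epsilon>\<^sup>2) powr \<theta> * a k powr (2 * \<theta>) * g powr (1 - \<theta>))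
          = C * (\<epsilon>\<^sup>2) powr \<theta> * S k * (real k powr (\<theta> - 1) * g powr (1 - \<theta>))"
        using akp by (simp add: field_simps)
      also have "\<dots> \<le> C * (\<epsilon>\<^sup>2) powr \<theta> * g * ((g / \<delta>) powr (\<theta> - 1) * g powr (1 - \<theta>))"
      proof (intro mult_mono mult_left_mono)
        show "S k \<le> g" using gS by simp
        have "\<delta> * real k \<le> g" using delta k1 gS by force
        hence "real k \<le> g / \<delta>" using delta by (simp add: field_simps)
        thus "real k powr (\<theta> - 1) \<le> (g / \<delta>) powr (\<theta> - 1)" using th by (intro powr_mono2) auto
      qed (use C Snn g1 th in auto)
      also have "(g / \<delta>) powr (\<theta> - 1) * g powr (1 - \<theta>) = \<delta> powr (1 - \<theta>)"
      proof -
        have "(g / \<delta>) powr (\<theta> - 1) * g powr (1 - \<theta>) = (g powr (\<theta> - 1) * g powr (1 - \<theta>)) / \<delta> powr (\<theta> - 1)"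
          using g1 delta by (simp add: powr_divide)
        also have "g powr (\<theta> - 1) * g powr (1 - \<theta>) = 1" using g1 by (simp add: powr_add[symmetric])
        also have "1 / \<delta> powr (\<theta> - 1) = \<delta> powr (1 - \<theta>)" using delta by (simp add: powr_minus_divide[symmetric])
        finally show ?thesis .
      qed
      finally have "(\<Sum>m\<in>P. f m) * W \<le> K1 * g" unfolding K1_def by (simp add: mult_ac)
      then show ?thesis unfolding eq K1_def[symmetric] K2_def[symmetric] using K2nn g1
        by (simp add: distrib_right add_increasing2 add_increasing)
    next
      case False
      have sP: "(\<Sum>m\<in>P. f m) \<le> R1"
      proof -
        have "(\<Sum>m\<in>P. f m) \<le> (\<Sum>m\<in>{1..Q}. f m)" unfolding P_def using fnn by (intro sum_mono2) auto
        also have "(\<Sum>m\<in>{1..Q}. f m) = (\<Sum>i<Q. f (i + 1))"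
        proof -
          have "{1..Q} = (\<lambda>i. i + 1) ` {..<Q}" using img_shift[of 1 Q] by simp
          thus ?thesis by (simp add: sum.reindex)
        qed
        also have "\<dots> \<le> R1" unfolding R1 using sumf fnn by (intro sum_le_suminf) auto
        finally show ?thesis .
      qed
      have "(\<epsilon>\<^sup>2 * (a k)\<^sup>2) powr \<theta> \<le> (\<epsilon>\<^sup>2 * (a N)\<^sup>2) powr \<theta>"
      proof -
        have "a k \<le> a N" using amono k1 False by auto
        hence "(a k)\<^sup>2 \<le> (a N)\<^sup>2" using ak by (intro power_mono) auto
        thus ?thesis using th by (intro powr_mono2 mult_left_mono) auto
      qed
      with x2 have x3: "(x\<^sup>2) powr \<theta> \<le> (\<epsilon>\<^sup>2 * (a N)\<^sup>2) powr \<theta>" by linarith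
      have gp1: "g powr (1 - \<theta>) \<le> 1" using g1 th by (intro powr_le_one_neg) auto
      have "(\<Sum>m\<in>P. f m) * W \<le> R1 * ((\<epsilon>\<^sup>2 * (a N)\<^sup>2) powr \<theta> * 1)"
        unfolding W_def using sP x3 gp1 R1nn
        by (intro mult_mono) (auto intro!: sum_nonneg fnn simp: Pk)
      also have "\<dots> \<le> K2 * g"
      proof -
        have "0 \<le> R1 * (\<epsilon>\<^sup>2 * (a N)\<^sup>2) powr \<theta>" using R1nn by simp
        hence "R1 * (\<epsilon>\<^sup>2 * (a N)\<^sup>2) powr \<theta> * 1 \<le> R1 * (\<epsilon>\<^sup>2 * (a N)\<^sup>2) powr \<theta> * g"
          using g1 by (intro mult_left_mono) auto
        thus ?thesis unfolding K2_def by (simp add: mult_ac)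
      qed
      finally show ?thesis unfolding eq K1_def[symmetric] K2_def[symmetric] using K1nn g1
        by (simp add: distrib_right add_increasing2 add_increasing)
    qed
  qed
qed

lemma sum_1Q: "(\<Sum>m\<in>{1..Q}. h m) = (\<Sum>i<Q. h (Suc i))"
proof -
  have "{1..Q} = (\<lambda>i. i + 1) ` {..<Q}" using img_shift[of 1 Q] by simp
  thus ?thesis by (simp add: sum.reindex)
qed


theorem theorem2:
  fixes \<tau> a :: "nat \<Rightarrow> real" and \<theta> C :: real and N :: nat
    and M :: "'s measure" and X :: "'s \<Rightarrow> real"
  assumes tau_nonneg: "\<forall>n\<ge>1. \<tau> n \<ge> 0"
    and a_pos: "\<forall>n\<ge>1. a n > 0"
    and a_mono: "\<forall>n\<ge>1. a n \<le> a (Suc n)"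
    and theta: "\<theta> \<ge> 1" and C: "C > 0" and N: "N \<ge> 2"
    and cond1: "\<forall>n\<ge>N.
        summable (\<lambda>i. real (i + n) powr \<theta> * \<tau> (i + n) / a (i + n) powr (2 * \<theta>)) \<and>
        a n powr (2 * \<theta>) / real n powr (\<theta> - 1)
          * (\<Sum>i. real (i + n) powr \<theta> * \<tau> (i + n) / a (i + n) powr (2 * \<theta>))
        \<le> C * (\<Sum>k\<in>{1..<n}. real k * \<tau> k)"
    and cond2: "liminf (\<lambda>n. INF k\<in>{n..}.
        ereal (a k ^ 2 / (real k * a n ^ 2) * (\<Sum>j\<in>{1..<n}. real j * \<tau> j))) > 0"
    and P: "prob_space M"
    and X: "X \<in> borel_measurable M"
    and hypX: "\<forall>\<epsilon>>0. summable (\<lambda>n. real (Suc n) * \<tau> (Suc n) *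
        measure M {x \<in> space M. \<bar>X x\<bar> \<ge> \<epsilon> * a (Suc n)})"
  shows "\<forall>\<epsilon>>0. summable (\<lambda>n. \<tau> (Suc n) *
        exp_neg_quot (\<epsilon>^2 * a (Suc n) ^ 2)
          (real (Suc n) * (\<integral>x. (X x)^2 * indicator {y \<in> space M. \<bar>X y\<bar> < \<epsilon> * a (Suc n)} x \<partial>M)))"
proof (intro allI impI)
  fix \<epsilon> :: real assume eps: "\<epsilon> > 0"
  interpret prob_space M by (rule P)
  have amono: "\<And>i j. 1 \<le> i \<Longrightarrow> i \<le> j \<Longrightarrow> a i \<le> a j" using a_mono_le[OF a_mono] by blast
  define f where "f m = real m powr \<theta> * \<tau> m / a m powr (2 * \<theta>)" for m
  define S where "S k = (\<Sum>j\<in>{1..<k}. real j * \<tau> j)" for k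
  have fnn: "\<And>m. m \<ge> 1 \<Longrightarrow> f m \<ge> 0" using tau_nonneg a_pos unfolding f_def by auto
  have Snn: "\<And>k. S k \<ge> 0" unfolding S_def using tau_nonneg by (intro sum_nonneg) auto
  have cond1': "\<forall>k\<ge>N. summable (\<lambda>i. f (i + k)) \<and>
        a k powr (2 * \<theta>) / real k powr (\<theta> - 1) * (\<Sum>i. f (i + k)) \<le> C * S k"
    using cond1 unfolding f_def S_def by simp
  have sumf: "summable (\<lambda>i. f (i + 1))"
  proof -
    have "summable (\<lambda>i. f (i + N))" using cond1' by blast
    hence "summable f" by (rule summable_iff_shift[THEN iffD1])
    thus ?thesis by (rule summable_iff_shift[THEN iffD2])
  qed
  define R1 where "R1 = (\<Sum>i. f (i + 1))"
  obtain \<delta> where delta: "\<delta> > 0" "\<forall>k\<ge>1. \<delta> * real k \<le> 1 + S k"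
  proof -
    obtain r where r: "0 < ereal r" "ereal r < liminf (\<lambda>n. INF k\<in>{n..}.
        ereal (a k ^ 2 / (real k * a n ^ 2) * (\<Sum>j\<in>{1..<n}. real j * \<tau> j)))"
      using ereal_dense2[OF cond2] by blast
    have "eventually (\<lambda>n. ereal r < (INF k\<in>{n..}.
        ereal (a k ^ 2 / (real k * a n ^ 2) * (\<Sum>j\<in>{1..<n}. real j * \<tau> j)))) sequentially"
      using less_LiminfD[OF r(2)] .
    then obtain n1 where n1: "\<forall>n\<ge>n1. ereal r < (INF k\<in>{n..}.
        ereal (a k ^ 2 / (real k * a n ^ 2) * (\<Sum>j\<in>{1..<n}. real j * \<tau> j)))"
      unfolding eventually_sequentially by blast
    define n2 where "n2 = max n1 1"
    have rS: "r * real n < S n" if n: "n \<ge> n2" for n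
    proof -
      have "ereal r < (INF k\<in>{n..}.
        ereal (a k ^ 2 / (real k * a n ^ 2) * (\<Sum>j\<in>{1..<n}. real j * \<tau> j)))"
        using n1 n unfolding n2_def by auto
      also have "\<dots> \<le> ereal (a n ^ 2 / (real n * a n ^ 2) * (\<Sum>j\<in>{1..<n}. real j * \<tau> j))"
        by (rule INF_lower) auto
      finally have "r < a n ^ 2 / (real n * a n ^ 2) * S n" unfolding S_def by simp
      moreover have "a n ^ 2 / (real n * a n ^ 2) * S n = S n / real n"
        using a_pos n unfolding n2_def by (auto simp: field_simps)
      ultimately have "r < S n / real n" by simp
      moreover have "real n > 0" using n unfolding n2_def by simp
      ultimately show ?thesis by (simp add: field_simps)
    qed
    have r0: "r > 0" using r(1) by simp
    have n2p: "real n2 \<ge> 1" unfolding n2_def by simp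
    show ?thesis
    proof (rule that[of "min r (1 / real n2)"])
      show "0 < min r (1 / real n2)" using r0 n2p by simp
      show "\<forall>k\<ge>1. min r (1 / real n2) * real k \<le> 1 + S k"
      proof (intro allI impI)
        fix k :: nat assume k: "k \<ge> 1"
        show "min r (1 / real n2) * real k \<le> 1 + S k"
        proof (cases "k \<ge> n2")
          case True
          have "min r (1 / real n2) * real k \<le> r * real k" by (intro mult_right_mono) auto
          also have "\<dots> \<le> S k" using rS[OF True] by simp
          finally show ?thesis by simp
        next
          case False
          have "min r (1 / real n2) * real k \<le> (1 / real n2) * real k" by (intro mult_right_mono) auto
          also have "\<dots> \<le> 1" using False n2p by (simp add: field_simps)
          finally show ?thesis using Snn[of k] by simp
        qed
      qed
    qed
  qed
  define h where "h n = real (Suc n) * \<tau> (Suc n) * measure M {x \<in> space M. \<bar>X x\<bar> \<ge> \<epsilon> * a (Suc n)}" for n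
  have sumh: "summable h" using hypX eps unfolding h_def by blast
  have hnn: "\<And>n. h n \<ge> 0" unfolding h_def using tau_nonneg by simp
  define L where "L = suminf h"
  have L0: "L \<ge> 0" unfolding L_def using sumh hnn by (intro suminf_nonneg) auto
  define K where "K = C * (\<epsilon>\<^sup>2) powr \<theta> * \<delta> powr (1 - \<theta>) + (\<epsilon>\<^sup>2 * (a N)\<^sup>2) powr \<theta> * R1"
  have R1nn: "R1 \<ge> 0" unfolding R1_def using fnn by (intro suminf_nonneg sumf) auto
  have K0: "K \<ge> 0" unfolding K_def using C R1nn by simp
  define T where "T m = (\<integral>x. (X x)^2 * indicator {y \<in> space M. \<bar>X y\<bar> < \<epsilon> * a m} x \<partial>M)" for m
  define y where "y m = real m * T m / (a m)\<^sup>2" for m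
  have T0: "T m \<ge> 0" for m unfolding T_def by (intro integral_nonneg_AE AE_I2) auto
  have y0: "y m \<ge> 0" for m unfolding y_def using T0 by simp
  have main: "(\<Sum>m\<in>{1..Q}. \<tau> m * y m powr \<theta>) \<le> K * (1 + L) powr \<theta>" for Q
  proof -
    define G where "G \<omega> = 1 + (\<Sum>j\<in>{1..Q}. real j * \<tau> j * indicator {x\<in>space M. \<epsilon> * a j \<le> \<bar>X x\<bar>} \<omega>)" for \<omega>
    define Z where "Z m \<omega> = real m / (a m)\<^sup>2 * ((X \<omega>)\<^sup>2 * indicator {x\<in>space M. \<bar>X x\<bar> < \<epsilon> * a m} \<omega>)" for m \<omega>
    define bG where "bG = 1 + (\<Sum>j\<in>{1..Q}. real j * \<tau> j)"
    have setsA: "{x\<in>space M. \<epsilon> * a j \<le> \<bar>X x\<bar>} \<in> sets M" for j using X by measurable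
    have setsB: "{x\<in>space M. \<bar>X x\<bar> < \<epsilon> * a j} \<in> sets M" for j using X by measurable
    have Gm: "G \<in> borel_measurable M" unfolding G_def using X setsA by measurable
    have Zm: "Z m \<in> borel_measurable M" for m unfolding Z_def using X setsB by measurable
    have Gb: "\<forall>\<omega>\<in>space M. 1 \<le> G \<omega> \<and> G \<omega> \<le> bG"
    proof
      fix \<omega> assume w: "\<omega> \<in> space M"
      have "0 \<le> (\<Sum>j\<in>{1..Q}. real j * \<tau> j * indicator {x\<in>space M. \<epsilon> * a j \<le> \<bar>X x\<bar>} \<omega>)"
        using tau_nonneg by (intro sum_nonneg) (auto simp: indicator_def)
      moreover have "(\<Sum>j\<in>{1..Q}. real j * \<tau> j * indicator {x\<in>space M. \<epsilon> * a j \<le> \<bar>X x\<bar>} \<omega>) \<le> (\<Sum>j\<in>{1..Q}. real j * \<tau> j)"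
        using tau_nonneg by (intro sum_mono) (auto simp: indicator_def)
      ultimately show "1 \<le> G \<omega> \<and> G \<omega> \<le> bG" unfolding G_def bG_def by simp
    qed
    have Zb: "\<forall>\<omega>\<in>space M. 0 \<le> Z m \<omega> \<and> Z m \<omega> \<le> real m * \<epsilon>\<^sup>2" if m: "m \<ge> 1" for m
    proof
      fix \<omega> assume w: "\<omega> \<in> space M"
      have am: "a m > 0" using a_pos m by auto
      show "0 \<le> Z m \<omega> \<and> Z m \<omega> \<le> real m * \<epsilon>\<^sup>2"
      proof (cases "\<bar>X \<omega>\<bar> < \<epsilon> * a m")
        case True
        have "(X \<omega>)\<^sup>2 \<le> (\<epsilon> * a m)\<^sup>2"
          using True by (metis abs_ge_zero abs_le_square_iff abs_of_pos am eps less_imp_le mult_pos_pos)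
        hence "real m / (a m)\<^sup>2 * (X \<omega>)\<^sup>2 \<le> real m / (a m)\<^sup>2 * (\<epsilon> * a m)\<^sup>2"
          by (intro mult_left_mono) auto
        also have "\<dots> = real m * \<epsilon>\<^sup>2" using am by (simp add: field_simps)
        finally show ?thesis using True w unfolding Z_def by simp
      next
        case False
        then show ?thesis using w eps m unfolding Z_def by simp
      qed
    qed
    have iW: "integrable M (\<lambda>\<omega>. Z m \<omega> powr \<theta> * G \<omega> powr (1 - \<theta>))" if m: "m \<ge> 1" for m
    proof (rule integrable_const_bound[where B="(real m * \<epsilon>\<^sup>2) powr \<theta>"])
      show "(\<lambda>\<omega>. Z m \<omega> powr \<theta> * G \<omega> powr (1 - \<theta>)) \<in> borel_measurable M"
        using Zm Gm by measurable
      show "AE \<omega> in M. norm (Z m \<omega> powr \<theta> * G \<omega> powr (1 - \<theta>)) \<le> (real m * \<epsilon>\<^sup>2) powr \<theta>"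
      proof (rule AE_I2)
        fix \<omega> assume w: "\<omega> \<in> space M"
        have "G \<omega> powr (1 - \<theta>) \<le> 1" using Gb w theta by (intro powr_le_one_neg) auto
        moreover have "Z m \<omega> powr \<theta> \<le> (real m * \<epsilon>\<^sup>2) powr \<theta>" using Zb[OF m] w theta by (intro powr_mono2) auto
        moreover have "G \<omega> powr (1 - \<theta>) \<ge> 0" by simp
        ultimately have "Z m \<omega> powr \<theta> * G \<omega> powr (1 - \<theta>) \<le> (real m * \<epsilon>\<^sup>2) powr \<theta> * 1"
          by (intro mult_mono) auto
        thus "norm (Z m \<omega> powr \<theta> * G \<omega> powr (1 - \<theta>)) \<le> (real m * \<epsilon>\<^sup>2) powr \<theta>" by simp
      qed
    qed
    have iG: "integrable M G"
      using Gb Gm by (intro integrable_const_bound[where B=bG] AE_I2) auto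
    have yZ: "y m = (\<integral>\<omega>. Z m \<omega> \<partial>M)" for m
      unfolding y_def Z_def T_def by simp
    define B where "B = (\<integral>\<omega>. G \<omega> \<partial>M)"
    have B: "B = 1 + (\<Sum>j\<in>{1..Q}. real j * \<tau> j * measure M {x\<in>space M. \<epsilon> * a j \<le> \<bar>X x\<bar>})"
    proof -
      have ii: "integrable M (\<lambda>\<omega>. real j * \<tau> j * indicator {x\<in>space M. \<epsilon> * a j \<le> \<bar>X x\<bar>} \<omega>)" for j
        using setsA by (intro integrable_mult_right integrable_real_indicator) (auto simp: less_top[symmetric])
      have "B = (\<integral>\<omega>. 1 \<partial>M) + (\<integral>\<omega>. (\<Sum>j\<in>{1..Q}. real j * \<tau> j * indicator {x\<in>space M. \<epsilon> * a j \<le> \<bar>X x\<bar>} \<omega>) \<partial>M)"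
        unfolding B_def G_def by (intro Bochner_Integration.integral_add Bochner_Integration.integrable_sum integrable_const ii)
      also have "(\<integral>\<omega>. (\<Sum>j\<in>{1..Q}. real j * \<tau> j * indicator {x\<in>space M. \<epsilon> * a j \<le> \<bar>X x\<bar>} \<omega>) \<partial>M)
          = (\<Sum>j\<in>{1..Q}. (\<integral>\<omega>. real j * \<tau> j * indicator {x\<in>space M. \<epsilon> * a j \<le> \<bar>X x\<bar>} \<omega> \<partial>M))"
        by (intro Bochner_Integration.integral_sum ii)
      also have "\<dots> = (\<Sum>j\<in>{1..Q}. real j * \<tau> j * measure M {x\<in>space M. \<epsilon> * a j \<le> \<bar>X x\<bar>})"
        by (intro sum.cong refl) (simp add: Int_absorb2)
      finally show ?thesis by (simp add: prob_space)
    qed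
    have BL: "B \<le> 1 + L"
    proof -
      have "(\<Sum>j\<in>{1..Q}. real j * \<tau> j * measure M {x\<in>space M. \<epsilon> * a j \<le> \<bar>X x\<bar>}) = (\<Sum>i<Q. h i)"
        unfolding h_def by (simp only: sum_1Q)
      also have "\<dots> \<le> L" unfolding L_def using sumh hnn by (intro sum_le_suminf) auto
      finally show ?thesis unfolding B by simp
    qed
    have B1: "B \<ge> 1"
    proof -
      have "(\<integral>\<omega>. 1 \<partial>M) \<le> B" unfolding B_def using Gb iG by (intro integral_mono) auto
      thus ?thesis by (simp add: prob_space)
    qed
    have hol: "y m powr \<theta> \<le> B powr (\<theta> - 1) * (\<integral>\<omega>. Z m \<omega> powr \<theta> * G \<omega> powr (1 - \<theta>) \<partial>M)"
      if m: "m \<in> {1..Q}" for m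
      unfolding yZ B_def using holder[OF P Zm Gm Zb Gb theta] m by auto
    have pw: "(\<Sum>m\<in>{1..Q}. \<tau> m * (Z m \<omega> powr \<theta> * G \<omega> powr (1 - \<theta>))) \<le> K * G \<omega>"
      if w: "\<omega> \<in> space M" for \<omega>
    proof -
      have Geq: "G \<omega> = 1 + (\<Sum>j\<in>{1..Q}. real j * \<tau> j * (if \<epsilon> * a j \<le> \<bar>X \<omega>\<bar> then 1 else 0))"
        unfolding G_def using w by (intro arg_cong[where f="\<lambda>s. 1 + s"] sum.cong) (auto simp: indicator_def)
      have Zeq: "Z m \<omega> = real m / (a m)\<^sup>2 * (\<bar>X \<omega>\<bar>\<^sup>2 * (if \<bar>X \<omega>\<bar> < \<epsilon> * a m then 1 else 0))" for m
        unfolding Z_def using w by (simp add: indicator_def)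
      show ?thesis unfolding Zeq K_def
        by (rule pointwise[OF tau_nonneg a_pos amono theta C eps abs_ge_zero _ f_def S_def sumf R1_def cond1' delta Geq])
          (use N in auto)
    qed
    have "(\<Sum>m\<in>{1..Q}. \<tau> m * y m powr \<theta>) \<le> (\<Sum>m\<in>{1..Q}. \<tau> m * (B powr (\<theta> - 1) * (\<integral>\<omega>. Z m \<omega> powr \<theta> * G \<omega> powr (1 - \<theta>) \<partial>M)))"
      using hol tau_nonneg by (intro sum_mono mult_left_mono) auto
    also have "\<dots> = B powr (\<theta> - 1) * (\<integral>\<omega>. (\<Sum>m\<in>{1..Q}. \<tau> m * (Z m \<omega> powr \<theta> * G \<omega> powr (1 - \<theta>))) \<partial>M)"
    proof -
      have "(\<integral>\<omega>. (\<Sum>m\<in>{1..Q}. \<tau> m * (Z m \<omega> powr \<theta> * G \<omega> powr (1 - \<theta>))) \<partial>M)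
          = (\<Sum>m\<in>{1..Q}. (\<integral>\<omega>. \<tau> m * (Z m \<omega> powr \<theta> * G \<omega> powr (1 - \<theta>)) \<partial>M))"
        using iW by (intro Bochner_Integration.integral_sum) auto
      also have "\<dots> = (\<Sum>m\<in>{1..Q}. \<tau> m * (\<integral>\<omega>. Z m \<omega> powr \<theta> * G \<omega> powr (1 - \<theta>) \<partial>M))"
        by simp
      finally show ?thesis by (simp add: sum_distrib_left mult_ac)
    qed
    also have "\<dots> \<le> B powr (\<theta> - 1) * (\<integral>\<omega>. K * G \<omega> \<partial>M)"
    proof (intro mult_left_mono integral_mono)
      show "integrable M (\<lambda>\<omega>. \<Sum>m\<in>{1..Q}. \<tau> m * (Z m \<omega> powr \<theta> * G \<omega> powr (1 - \<theta>)))"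
        using iW by (intro Bochner_Integration.integrable_sum integrable_mult_right) auto
      show "integrable M (\<lambda>\<omega>. K * G \<omega>)" using iG by simp
    qed (use pw in auto)
    also have "\<dots> = K * (B powr (\<theta> - 1) * B)" unfolding B_def by simp
    also have "B powr (\<theta> - 1) * B = B powr \<theta>"
    proof -
      have "B powr (\<theta> - 1) * B powr 1 = B powr (\<theta> - 1 + 1)" by (rule powr_add[symmetric])
      thus ?thesis using B1 by simp
    qed
    also have "K * B powr \<theta> \<le> K * (1 + L) powr \<theta>"
      using K0 BL B1 theta by (intro mult_left_mono powr_mono2) auto
    finally show ?thesis .
  qed
  have tb: "0 \<le> \<tau> m * exp_neg_quot (\<epsilon>^2 * a m ^ 2) (real m * T m) \<and>
      \<tau> m * exp_neg_quot (\<epsilon>^2 * a m ^ 2) (real m * T m) \<le> \<theta> powr \<theta> / (\<epsilon>\<^sup>2) powr \<theta> * (\<tau> m * y m powr \<theta>)"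
    if m: "m \<ge> 1" for m
  proof -
    have tau: "\<tau> m \<ge> 0" using tau_nonneg m by auto
    have am: "a m > 0" using a_pos m by auto
    have rhs0: "0 \<le> \<theta> powr \<theta> / (\<epsilon>\<^sup>2) powr \<theta> * (\<tau> m * y m powr \<theta>)" using tau by simp
    show ?thesis
    proof (cases "T m = 0")
      case True
      then show ?thesis using rhs0 by (simp add: exp_neg_quot_def)
    next
      case False
      hence Tp: "T m > 0" using T0[of m] by simp
      define s where "s = real m * T m"
      define t where "t = \<epsilon>^2 * a m ^ 2"
      have sp: "s > 0" unfolding s_def using Tp m by simp
      have tp: "t > 0" unfolding t_def using eps am by simp
      have e0: "exp_neg_quot t s = exp (- (t / s))" unfolding exp_neg_quot_def using sp by simp
      also have "\<dots> \<le> \<theta> powr \<theta> * (t / s) powr (- \<theta>)"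
        using sp tp theta by (intro exp_bound) auto
      also have "(t / s) powr (- \<theta>) = (s / t) powr \<theta>"
        using sp tp by (simp add: powr_minus_divide powr_divide)
      also have "s / t = y m / \<epsilon>\<^sup>2"
        unfolding s_def t_def y_def using am eps by (simp add: field_simps)
      also have "(y m / \<epsilon>\<^sup>2) powr \<theta> = y m powr \<theta> / (\<epsilon>\<^sup>2) powr \<theta>"
        using y0[of m] by (simp add: powr_divide)
      finally have "exp_neg_quot t s \<le> \<theta> powr \<theta> / (\<epsilon>\<^sup>2) powr \<theta> * y m powr \<theta>" by simp
      hence "\<tau> m * exp_neg_quot t s \<le> \<tau> m * (\<theta> powr \<theta> / (\<epsilon>\<^sup>2) powr \<theta> * y m powr \<theta>)"
        using tau by (intro mult_left_mono) auto
      moreover have "0 \<le> \<tau> m * exp_neg_quot t s" using tau e0 by simp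
      ultimately show ?thesis unfolding s_def t_def by (simp add: mult_ac)
    qed
  qed
  have "summable (\<lambda>n. \<tau> (Suc n) * exp_neg_quot (\<epsilon>^2 * a (Suc n) ^ 2) (real (Suc n) * T (Suc n)))"
  proof (rule summableI_nonneg_bounded)
    fix n show "0 \<le> \<tau> (Suc n) * exp_neg_quot (\<epsilon>^2 * a (Suc n) ^ 2) (real (Suc n) * T (Suc n))"
      using tb[of "Suc n"] by simp
  next
    fix Q
    have "(\<Sum>i<Q. \<tau> (Suc i) * exp_neg_quot (\<epsilon>^2 * a (Suc i) ^ 2) (real (Suc i) * T (Suc i)))
        \<le> (\<Sum>i<Q. \<theta> powr \<theta> / (\<epsilon>\<^sup>2) powr \<theta> * (\<tau> (Suc i) * y (Suc i) powr \<theta>))"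
    proof (intro sum_mono)
      fix i assume "i \<in> {..<Q}"
      have "Suc i \<ge> 1" by simp
      from tb[OF this] show "\<tau> (Suc i) * exp_neg_quot (\<epsilon>^2 * a (Suc i) ^ 2) (real (Suc i) * T (Suc i))
        \<le> \<theta> powr \<theta> / (\<epsilon>\<^sup>2) powr \<theta> * (\<tau> (Suc i) * y (Suc i) powr \<theta>)" by blast
    qed
    also have "\<dots> = \<theta> powr \<theta> / (\<epsilon>\<^sup>2) powr \<theta> * (\<Sum>m\<in>{1..Q}. \<tau> m * y m powr \<theta>)"
      by (simp only: sum_1Q sum_distrib_left)
    also have "\<dots> \<le> \<theta> powr \<theta> / (\<epsilon>\<^sup>2) powr \<theta> * (K * (1 + L) powr \<theta>)"
      using main by (intro mult_left_mono) auto
    finally show "(\<Sum>i<Q. \<tau> (Suc i) * exp_neg_quot (\<epsilon>^2 * a (Suc i) ^ 2) (real (Suc i) * T (Suc i)))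
        \<le> \<theta> powr \<theta> / (\<epsilon>\<^sup>2) powr \<theta> * (K * (1 + L) powr \<theta>)" .
  qed
  thus "summable (\<lambda>n. \<tau> (Suc n) *
        exp_neg_quot (\<epsilon>^2 * a (Suc n) ^ 2)
          (real (Suc n) * (\<integral>x. (X x)^2 * indicator {y \<in> space M. \<bar>X y\<bar> < \<epsilon> * a (Suc n)} x \<partial>M)))"
    unfolding T_def .
qed

end
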